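(* Let $Q\in\mathbb R^{n\times n}$ be symmetric positive semidefinite, $b_0,\ldots,b_p\in\mathbb R^n$, $d_0,\ldots,d_p\in\mathbb R$, $-\infty\le l_i\le u_i\le+\infty$, $f_i(x)=x^TQx+2b_i^Tx+d_i$, and consider \[ ({\rm UQ})\quad \max_{x}\ f_0(x)\quad\text{s.t.}\quad l_i\le f_i(x)\le u_i,\ i=1,\ldots,p, \] \[ ({\rm SOCP})\quad \max_{x,t}\ t+2b_0^Tx+d_0\quad\text{s.t.}\quad l_i\le t+2b_i^Tx+d_i\le u_i,\ i=1,\ldots,p,\quad \left\|\begin{pmatrix}Q^{1/2}x\\ \frac{t-1}{2}\end{pmatrix}\right\|\le\frac{t+1}{2}. \] Suppose ${\rm rank}[b_1,\ldots,b_p]\le{\rm rank}(Q)-1$. Then (UQ) is equivalent to (SOCP) in the sense that $x^*$ globally solves (UQ) if and only if $(x^*,t^* ):=(x^*,x^{*T}Qx^* )$ globally solves (SOCP).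
   Context: $Q^{1/2}$ is the positive semidefinite square root of $Q$; $\|\cdot\|$ is the Euclidean norm. *)

theory Defs
  imports "HOL-Analysis.Analysis" "HOL-Library.Extended_Real"
begin

definition sym_psd :: "real^'n^'n \<Rightarrow> bool" where
  "sym_psd A \<longleftrightarrow> transpose A = A \<and> (\<forall>x. x \<bullet> (A *v x) \<ge> 0)"

definition is_psd_sqrt :: "real^'n^'n \<Rightarrow> real^'n^'n \<Rightarrow> bool" where
  "is_psd_sqrt S Q \<longleftrightarrow> sym_psd S \<and> S ** S = Q"

definition qf :: "real^'n^'n \<Rightarrow> (nat \<Rightarrow> real^'n) \<Rightarrow> (nat \<Rightarrow> real) \<Rightarrow> nat \<Rightarrow> real^'n \<Rightarrow> real" where
  "qf Q b d i x = x \<bullet> (Q *v x) + 2 * (b i \<bullet> x) + d i"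

definition UQ_feasible where
  "UQ_feasible Q b d l u p x \<longleftrightarrow>
     (\<forall>i\<in>{1..p}. l i \<le> ereal (qf Q b d i x) \<and> ereal (qf Q b d i x) \<le> u i)"

definition UQ_global_sol where
  "UQ_global_sol Q b d l u p xs \<longleftrightarrow> UQ_feasible Q b d l u p xs \<and>
     (\<forall>x. UQ_feasible Q b d l u p x \<longrightarrow> qf Q b d 0 x \<le> qf Q b d 0 xs)"

definition SOCP_obj :: "(nat \<Rightarrow> real^'n) \<Rightarrow> (nat \<Rightarrow> real) \<Rightarrow> nat \<Rightarrow> real^'n \<Rightarrow> real \<Rightarrow> real" where
  "SOCP_obj b d i x t = t + 2 * (b i \<bullet> x) + d i"

definition SOCP_feasible where
  "SOCP_feasible S b d l u p x t \<longleftrightarrow>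
     (\<forall>i\<in>{1..p}. l i \<le> ereal (SOCP_obj b d i x t) \<and> ereal (SOCP_obj b d i x t) \<le> u i) \<and>
     norm (S *v x, (t - 1) / 2) \<le> (t + 1) / 2"

definition SOCP_global_sol where
  "SOCP_global_sol S b d l u p xs ts \<longleftrightarrow> SOCP_feasible S b d l u p xs ts \<and>
     (\<forall>x t. SOCP_feasible S b d l u p x t \<longrightarrow> SOCP_obj b d 0 x t \<le> SOCP_obj b d 0 xs ts)"

end

theory Submission
  imports Defs
begin

lemma sym_inner:
  fixes A :: "real^'n^'n"
  assumes "transpose A = A"
  shows "x \<bullet> (A *v y) = (A *v x) \<bullet> y"
proof -
  have "x \<bullet> (A *v y) = (x v* A) \<bullet> y" by (simp add: dot_lmul_matrix)
  also have "x v* A = A *v x" using vector_transpose_matrix[of x A] assms by simp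
  finally show ?thesis .
qed

lemma quad_sq:
  fixes Q S :: "real^'n^'n"
  assumes "is_psd_sqrt S Q"
  shows "x \<bullet> (Q *v x) = (norm (S *v x))^2"
proof -
  have tS: "transpose S = S" and SS: "S ** S = Q"
    using assms by (auto simp: is_psd_sqrt_def sym_psd_def)
  have "x \<bullet> (Q *v x) = x \<bullet> (S *v (S *v x))" by (simp add: matrix_vector_mul_assoc SS)
  also have "\<dots> = (S *v x) \<bullet> (S *v x)" using sym_inner[OF tS] by simp
  finally show ?thesis by (simp add: power2_norm_eq_inner)
qed

lemma cone_iff:
  fixes N t :: real
  assumes "N \<ge> 0"
  shows "sqrt (N^2 + ((t-1)/2)^2) \<le> (t+1)/2 \<longleftrightarrow> N^2 \<le> t"
proof
  assume h: "sqrt (N^2 + ((t-1)/2)^2) \<le> (t+1)/2"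
  have "0 \<le> sqrt (N^2 + ((t-1)/2)^2)" by simp
  hence nn: "0 \<le> (t+1)/2" using h by linarith
  have "(sqrt (N^2 + ((t-1)/2)^2))^2 \<le> ((t+1)/2)^2"
    using h by (intro power_mono) auto
  hence "N^2 + ((t-1)/2)^2 \<le> ((t+1)/2)^2" by simp
  thus "N^2 \<le> t" by (simp add: power2_eq_square field_simps)
next
  assume h: "N^2 \<le> t"
  have t0: "0 \<le> t" using h by (metis order_trans zero_le_power2)
  have "N^2 + ((t-1)/2)^2 \<le> ((t+1)/2)^2" using h by (simp add: power2_eq_square field_simps)
  hence "sqrt (N^2 + ((t-1)/2)^2) \<le> sqrt (((t+1)/2)^2)" by (rule real_sqrt_le_mono)
  also have "\<dots> = (t+1)/2" using t0 by simp
  finally show "sqrt (N^2 + ((t-1)/2)^2) \<le> (t+1)/2" .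
qed

lemma socp_feas_iff:
  fixes Q S :: "real^'n^'n"
  assumes "is_psd_sqrt S Q"
  shows "SOCP_feasible S b d l u p x t \<longleftrightarrow>
     (\<forall>i\<in>{1..p}. l i \<le> ereal (SOCP_obj b d i x t) \<and> ereal (SOCP_obj b d i x t) \<le> u i) \<and>
     x \<bullet> (Q *v x) \<le> t"
proof -
  have n: "norm (S *v x, (t-1)/2) = sqrt ((norm (S *v x))^2 + ((t-1)/2)^2)"
    by (simp add: norm_Pair power_divide)
  show ?thesis
    unfolding SOCP_feasible_def n cone_iff[OF norm_ge_zero] quad_sq[OF assms] ..
qed

lemma uq_socp:
  "UQ_feasible Q b d l u p x \<longleftrightarrow>
   (\<forall>i\<in>{1..p}. l i \<le> ereal (SOCP_obj b d i x (x \<bullet> (Q *v x))) \<and>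
        ereal (SOCP_obj b d i x (x \<bullet> (Q *v x))) \<le> u i)"
  by (simp add: UQ_feasible_def qf_def SOCP_obj_def)

lemma exists_dir:
  fixes Q S :: "real^'n^'n" and b :: "nat \<Rightarrow> real^'n"
  assumes "sym_psd Q" "dim (b ` {1..p}) + 1 \<le> rank Q"
  shows "\<exists>v. (\<forall>i\<in>{1..p}. b i \<bullet> v = 0) \<and> Q *v v \<noteq> 0"
proof (rule ccontr)
  assume H: "\<not> ?thesis"
  have tQ: "transpose Q = Q" using assms(1) by (simp add: sym_psd_def)
  let ?B = "span (b ` {1..p})"
  let ?W = "{y \<in> UNIV. \<forall>x\<in>?B. orthogonal x y}"
  let ?R = "range (\<lambda>x. Q *v x)"
  let ?K = "{y \<in> UNIV. \<forall>x\<in>?R. orthogonal x y}"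
  have d1: "dim ?W + dim ?B = dim (UNIV :: (real^'n) set)"
    by (rule dim_subspace_orthogonal_to_vectors) auto
  have sR: "subspace ?R"
    by (rule linear_subspace_image) (auto intro: matrix_vector_mul_linear)
  have d2: "dim ?K + dim ?R = dim (UNIV :: (real^'n) set)"
    by (rule dim_subspace_orthogonal_to_vectors) (use sR in auto)
  have "?W \<subseteq> ?K"
  proof
    fix v assume v: "v \<in> ?W"
    have "\<forall>i\<in>{1..p}. b i \<bullet> v = 0"
      using v by (auto simp: orthogonal_def span_base)
    hence Qv: "Q *v v = 0" using H by blast
    show "v \<in> ?K"
    proof (clarsimp simp: orthogonal_def)
      fix w
      have "(Q *v w) \<bullet> v = w \<bullet> (Q *v v)" using sym_inner[OF tQ] by simp
      thus "(Q *v w) \<bullet> v = 0" using Qv by simp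
    qed
  qed
  hence "dim ?W \<le> dim ?K" by (rule dim_subset)
  moreover have "rank Q = dim ?R" by (rule rank_dim_range)
  moreover have "dim ?B = dim (b ` {1..p})" by (rule dim_span)
  ultimately show False using d1 d2 assms(2) by linarith
qed

theorem corollary4:
  fixes Q S :: "real^'n^'n" and b :: "nat \<Rightarrow> real^'n" and d :: "nat \<Rightarrow> real"
    and l u :: "nat \<Rightarrow> ereal" and p :: nat and xs :: "real^'n"
  assumes "sym_psd Q"
    and "is_psd_sqrt S Q"
    and "\<forall>i\<in>{1..p}. l i \<le> u i"
    and "dim (b ` {1..p}) + 1 \<le> rank Q"
  shows "UQ_global_sol Q b d l u p xs \<longleftrightarrow> SOCP_global_sol S b d l u p xs (xs \<bullet> (Q *v xs))"
proof
  assume U: "UQ_global_sol Q b d l u p xs"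
  have tQ: "transpose Q = Q" using assms(1) by (simp add: sym_psd_def)
  obtain v0 where v0: "\<forall>i\<in>{1..p}. b i \<bullet> v0 = 0" "Q *v v0 \<noteq> 0"
    using exists_dir[OF assms(1) assms(4)] by blast
  define v where "v = (if b 0 \<bullet> v0 \<ge> 0 then v0 else - v0)"
  have vb: "\<forall>i\<in>{1..p}. b i \<bullet> v = 0" using v0(1) by (simp add: v_def)
  have vb0: "b 0 \<bullet> v \<ge> 0" by (simp add: v_def)
  have neg: "Q *v (- v0) = - (Q *v v0)" using matrix_vector_mult_diff_distrib[of Q 0 v0] by simp
  have "Q *v v \<noteq> 0" using v0(2) neg by (simp add: v_def)
  have tS: "transpose S = S" and SS: "S ** S = Q"
    using assms(2) by (auto simp: is_psd_sqrt_def sym_psd_def)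
  have "S *v v \<noteq> 0"
  proof
    assume "S *v v = 0"
    hence "S *v (S *v v) = 0" by simp
    thus False using \<open>Q *v v \<noteq> 0\<close> by (simp add: matrix_vector_mul_assoc SS)
  qed
  hence apos: "v \<bullet> (Q *v v) > 0" using quad_sq[OF assms(2), of v] by simp
  have xsF: "SOCP_feasible S b d l u p xs (xs \<bullet> (Q *v xs))"
    using U by (simp add: socp_feas_iff[OF assms(2)] UQ_global_sol_def uq_socp)
  show "SOCP_global_sol S b d l u p xs (xs \<bullet> (Q *v xs))"
    unfolding SOCP_global_sol_def
  proof (intro conjI allI impI xsF)
    fix x t assume F: "SOCP_feasible S b d l u p x t"
    have lin: "\<forall>i\<in>{1..p}. l i \<le> ereal (SOCP_obj b d i x t) \<and> ereal (SOCP_obj b d i x t) \<le> u i"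
      and qt: "x \<bullet> (Q *v x) \<le> t" using F socp_feas_iff[OF assms(2)] by auto
    define a where "a = v \<bullet> (Q *v v)"
    define c where "c = v \<bullet> (Q *v x)"
    define q where "q = x \<bullet> (Q *v x)"
    define r where "r = sqrt (c^2 + a*(t-q))"
    define s where "s = (r - c)/a"
    have a0: "a > 0" using apos by (simp add: a_def)
    have aq: "0 \<le> a*(t-q)" using a0 qt q_def by simp
    have rr: "r^2 = c^2 + a*(t-q)" unfolding r_def
      by (intro real_sqrt_pow2) (use aq in \<open>metis add_nonneg_nonneg zero_le_power2\<close>)
    have r0: "r \<ge> 0" unfolding r_def using aq by (intro real_sqrt_ge_zero) (metis add_nonneg_nonneg zero_le_power2)
    have "c^2 \<le> r^2" using rr a0 qt q_def by (simp add: mult_nonneg_nonneg)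
    hence "\<bar>c\<bar> \<le> r" using r0 by (metis abs_le_square_iff abs_of_nonneg)
    hence s0: "s \<ge> 0" using a0 by (simp add: s_def)
    have xv: "x \<bullet> (Q *v v) = c" using sym_inner[OF tQ, of x v] by (simp add: c_def inner_commute)
    have "(x + s *\<^sub>R v) \<bullet> (Q *v (x + s *\<^sub>R v)) = q + 2 * s * c + s^2 * a"
      by (simp add: matrix_vector_right_distrib matrix_vector_mult_scaleR inner_add_left
          inner_add_right q_def a_def c_def[symmetric] xv power2_eq_square algebra_simps)
    also have "\<dots> = t"
    proof -
      have ra: "r = c + s * a" using a0 by (simp add: s_def)
      have "a * (2 * s * c + s^2 * a) = r^2 - c^2"
        unfolding ra by (simp add: power2_eq_square algebra_simps)
      also have "\<dots> = a * (t - q)" using rr by simp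
      finally have "2 * s * c + s^2 * a = t - q" using a0 by simp
      thus ?thesis by simp
    qed
    finally have eqt: "(x + s *\<^sub>R v) \<bullet> (Q *v (x + s *\<^sub>R v)) = t" .
    let ?y = "x + s *\<^sub>R v"
    have obj: "\<And>i. SOCP_obj b d i ?y t = SOCP_obj b d i x t + 2 * s * (b i \<bullet> v)"
      by (simp add: SOCP_obj_def inner_add_right algebra_simps)
    have "UQ_feasible Q b d l u p ?y"
      unfolding uq_socp eqt using lin vb obj by simp
    hence "qf Q b d 0 ?y \<le> qf Q b d 0 xs" using U by (simp add: UQ_global_sol_def)
    moreover have "qf Q b d 0 ?y = SOCP_obj b d 0 ?y t" by (simp add: qf_def SOCP_obj_def eqt)
    moreover have "SOCP_obj b d 0 x t \<le> SOCP_obj b d 0 ?y t" using obj s0 vb0 by simp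
    ultimately show "SOCP_obj b d 0 x t \<le> SOCP_obj b d 0 xs (xs \<bullet> (Q *v xs))"
      by (simp add: qf_def SOCP_obj_def)
  qed
next
  assume H: "SOCP_global_sol S b d l u p xs (xs \<bullet> (Q *v xs))"
  show "UQ_global_sol Q b d l u p xs"
    unfolding UQ_global_sol_def
  proof (intro conjI allI impI)
    show "UQ_feasible Q b d l u p xs"
      using H by (simp add: SOCP_global_sol_def socp_feas_iff[OF assms(2)] uq_socp)
    fix x assume "UQ_feasible Q b d l u p x"
    hence "SOCP_feasible S b d l u p x (x \<bullet> (Q *v x))"
      by (simp add: socp_feas_iff[OF assms(2)] uq_socp)
    hence "SOCP_obj b d 0 x (x \<bullet> (Q *v x)) \<le> SOCP_obj b d 0 xs (xs \<bullet> (Q *v xs))"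
      using H by (simp add: SOCP_global_sol_def)
    thus "qf Q b d 0 x \<le> qf Q b d 0 xs" by (simp add: qf_def SOCP_obj_def)
  qed
qed

end
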